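(* Let $a,b\in\mathbb{N}$ with $b\ge 2$ and $a=b(b-1)$. Then for every integer $k\ge 2$ there exists an integer $H_k\ge1$ (depending on $a,b,k$) such that for every integer $n\ge 0$, the induced subgraph $G_{a,b,a,b-1}[\{n+1,\ldots,n+H_k\}]$ contains a clique on $k$ vertices. In particular $\omega(G_{a,b,a,b-1})=\infty$.
   Context: $\mathbb{N}=\{1,2,\dots\}$. $R_{a,b,a,b-1} := \left\{ \frac{an+b}{an+b-1} : n \in \mathbb{N} \right\}$; $G_{a,b,a,b-1}$ is the graph with vertex set $\mathbb{N}$ and edge set $\{\{m,n\}: m/n\in R_{a,b,a,b-1}\}$. For $W\subseteq\mathbb{N}$, $G[W]$ is the induced subgraph on $W$. $\omega$ denotes clique number. *)

theory Defs
  imports Complex_Main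
begin

definition ratio_set :: "nat \<Rightarrow> nat \<Rightarrow> nat \<Rightarrow> nat \<Rightarrow> real set" where
  "ratio_set a b c d = {(real a * real t + real b) / (real c * real t + real d) | t. t \<ge> 1}"

definition G_adj :: "nat \<Rightarrow> nat \<Rightarrow> nat \<Rightarrow> nat \<Rightarrow> nat \<Rightarrow> nat \<Rightarrow> bool" where
  "G_adj a b c d m n \<longleftrightarrow> m \<ge> 1 \<and> n \<ge> 1 \<and>
     (real m / real n \<in> ratio_set a b c d \<or> real n / real m \<in> ratio_set a b c d)"

definition G_clique :: "nat \<Rightarrow> nat \<Rightarrow> nat \<Rightarrow> nat \<Rightarrow> nat set \<Rightarrow> bool" where
  "G_clique a b c d S \<longleftrightarrow> S \<subseteq> {1..} \<and>
     (\<forall>m\<in>S. \<forall>n\<in>S. m \<noteq> n \<longrightarrow> G_adj a b c d m n)"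

end

theory Submission imports Defs "HOL-Number_Theory.Number_Theory"
begin

lemma decomp:
  fixes b n :: nat
  assumes "n > 0"
  shows "\<exists>Y g e. n = Y * g \<and> coprime Y b \<and> g dvd b ^ e"
  using assms
proof (induction n rule: less_induct)
  case (less n)
  show ?case
  proof (cases "coprime n b")
    case True
    have "n = n * 1 \<and> coprime n b \<and> 1 dvd b ^ 0" using True by simp
    then show ?thesis by (intro exI[of _ n] exI[of _ "1::nat"] exI[of _ "0::nat"])
  next
    case False
    define p where "p = gcd n b"
    have p1: "p \<noteq> 1" using False unfolding p_def coprime_iff_gcd_eq_1 .
    have pd: "p dvd n" "p dvd b" using p_def by auto
    then obtain n' where n': "n = p * n'" by blast
    have p0: "p > 0" using less.prems p_def by simp
    have p2: "p \<ge> 2" using p0 p1 by linarith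
    have n'0: "n' > 0" using less.prems n' by simp
    have "1 * n' < p * n'" using p2 n'0 by (intro mult_strict_right_mono) auto
    hence "n' < n" using n' by simp
    then obtain Y g e where h: "n' = Y * g" "coprime Y b" "g dvd b ^ e"
      using less.IH n'0 by blast
    have "p * g dvd b * b ^ e" using h(3) pd(2) by (rule mult_dvd_mono[rotated])
    hence "p * g dvd b ^ Suc e" by simp
    moreover have "n = Y * (p * g)" using h(1) n' by simp
    ultimately show ?thesis using h(2) by (intro exI[of _ Y] exI[of _ "p*g"] exI[of _ "Suc e"] conjI)
  qed
qed


definition RC :: "nat \<Rightarrow> nat set \<Rightarrow> bool" where
  "RC b S \<longleftrightarrow> (\<forall>m\<in>S. \<forall>n\<in>S. n < m \<longrightarrow> b*(m-n) dvd m \<and> (b-1)*(m-n) dvd n)"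

lemma coprime_shift:
  fixes s t b :: nat
  assumes "coprime t b" "b dvd s"
  shows "coprime (s + t) b"
proof -
  from assms(2) obtain k where "s = b*k" by (rule dvdE)
  have e: "s + t = k*b + t" using \<open>s = b*k\<close> by simp
  have "gcd (s + t) b = gcd b (k*b + t)" unfolding e by (rule gcd.commute)
  also have "\<dots> = gcd b t" by (rule gcd_add_mult)
  also have "\<dots> = gcd t b" by (rule gcd.commute)
  also have "\<dots> = 1" using assms(1) by (simp only: coprime_iff_gcd_eq_1)
  finally show ?thesis by (simp only: coprime_iff_gcd_eq_1)
qed

lemma step:
  fixes b :: nat and S :: "nat set"
  assumes b2: "b \<ge> 2" and fin: "finite S" and pos: "\<forall>s\<in>S. s > 0"
    and bd: "\<forall>s\<in>S. b dvd s" and rc: "RC b S"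
  shows "\<exists>T. finite T \<and> card T = Suc (card S) \<and> (\<forall>t\<in>T. t > 0) \<and> RC b T"
proof -
  define L where "L = \<Prod>S"
  have L0: "L > 0" using pos fin unfolding L_def by (simp add: prod_pos)
  obtain Y g e where Yg: "L = Y*g" "coprime Y b" "g dvd b^e" using decomp[where b=b, OF L0] by auto
  have Y0: "Y > 0" using Yg(1) L0 by (cases Y) auto
  define \<beta> where "\<beta> = (b-1)*Y"
  have cb: "coprime \<beta> b" unfolding \<beta>_def using Yg(2) b2 coprime_diff_one_left_nat[of b] by simp
  have beta0: "\<beta> > 0" unfolding \<beta>_def using Y0 b2 by simp
  define P where "P = (\<Prod>s\<in>S. s + \<beta>)"
  have P0: "P > 0" unfolding P_def using beta0 by (intro prod_pos) simp
  have cP: "coprime P b" unfolding P_def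
    by (rule prod_coprime_left, rule coprime_shift[OF cb], use bd in auto)
  define M where "M = b ^ Suc e"
  have M2: "M \<ge> 2"
  proof -
    have "1 \<le> b^e" using b2 by simp
    hence "b*1 \<le> b*b^e" by (rule mult_le_mono2)
    thus ?thesis unfolding M_def power_Suc using b2 by linarith
  qed
  have cPM: "coprime P M" unfolding M_def using cP by simp
  define k where "k = totient M"
  have k0: "k > 0" unfolding k_def using M2 by simp
  have eu: "[P ^ k = 1] (mod M)" unfolding k_def using euler_theorem[OF cPM] .
  hence "P ^ k mod M = 1" using M2 by (simp add: cong_def)
  moreover have "P ^ k = M * (P ^ k div M) + P ^ k mod M" by simp
  ultimately have r: "P ^ k = M*(P ^ k div M) + 1" by simp
  define r where "r = P ^ k div M"
  have r: "P ^ k = M*r + 1" using r unfolding r_def .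
  define V' where "V' = P^(k-1) * (M-1)"
  have PV: "P * V' = P^k * (M-1)"
  proof -
    obtain k' where "k = Suc k'" using k0 by (cases k) auto
    thus ?thesis by (simp add: V'_def)
  qed
  obtain M' where M': "M = Suc M'" using M2 by (cases M) auto
  have "1 + P*V' = M*(r*(M-1) + 1)" unfolding PV r M' by (simp add: algebra_simps)
  define h where "h = r*(M-1) + 1"
  have h: "1 + P*V' = M*h" unfolding h_def by fact
  define V where "V = Y*V'"
  define z where "z = (b-1)*P*V"
  define c where "c = \<beta> + z"
  have V'0: "V' > 0" unfolding V'_def using P0 M2 by simp
  have z0: "z > 0" unfolding z_def V_def using b2 P0 V'0 Y0 by simp
  have aux: "(x::nat)*Y + x*P*(Y*V') = x*Y*(1+P*V')" for x by (simp add: algebra_simps)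
  have cform: "c = (b-1)*Y*(M*h)" unfolding c_def z_def \<beta>_def V_def h[symmetric]
    by (rule aux)
  define T where "T = (\<lambda>s. c + s) ` S \<union> {z}"
  have zn: "z \<notin> (\<lambda>s. c + s) ` S" unfolding c_def using beta0 by auto
  have cardT: "card T = Suc (card S)" unfolding T_def using zn fin
    by (simp add: card_image inj_on_def)
  have finT: "finite T" unfolding T_def using fin by simp
  have posT: "\<forall>t\<in>T. t > 0" unfolding T_def using z0 pos by auto
  have case2: "b*((c+s) - z) dvd (c+s) \<and> (b-1)*((c+s) - z) dvd z" if s: "s \<in> S" for s
  proof -
    define Ps where "Ps = (\<Prod>t\<in>S-{s}. t + \<beta>)"
    have PPs: "P = (s+\<beta>)*Ps" unfolding P_def Ps_def using fin s by (simp add: prod.remove)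
    have d: "(c+s) - z = s + \<beta>" unfolding c_def by simp
    have g1: "x*((s+\<beta>)*Ps)*V = (s+\<beta>)*(x*Ps*V)" for x::nat by (simp add: algebra_simps)
    have zz: "z = (s+\<beta>)*((b-1)*Ps*V)" unfolding z_def PPs by (rule g1)
    have g2: "\<beta> + (s+\<beta>)*y + s = (s+\<beta>)*(1+y)" for y::nat by (simp add: algebra_simps)
    have cs: "c + s = (s+\<beta>)*(1 + (b-1)*Ps*V)" unfolding c_def zz by (rule g2)
    have g3: "1 + (s + x*Y)*Ps*V' = (1 + x*Ps*(Y*V')) + s*(Ps*V')" for x::nat by (simp add: algebra_simps)
    have e3: "1 + P*V' = (1 + (b-1)*Ps*V) + s*(Ps*V')" unfolding PPs V_def \<beta>_def by (rule g3)
    have e4: "b dvd 1 + P*V'" unfolding h M_def by simp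
    have e5: "b dvd s*(Ps*V')" using bd s by simp
    have "b dvd (1 + (b-1)*Ps*V) + s*(Ps*V')" using e4 unfolding e3 .
    hence "b dvd 1 + (b-1)*Ps*V" by (rule dvd_add_left_iff[OF e5, THEN iffD1])
    hence "b*(s+\<beta>) dvd (1 + (b-1)*Ps*V)*(s+\<beta>)" by (rule mult_dvd_mono[OF _ dvd_refl])
    hence "b*(s+\<beta>) dvd c + s" unfolding cs by (simp only: mult.commute)
    then show ?thesis unfolding d using zz by simp
  qed
  have case3: "b*((c+s') - (c+s)) dvd (c+s') \<and> (b-1)*((c+s') - (c+s)) dvd (c+s)"
    if s: "s \<in> S" "s' \<in> S" "s < s'" for s s'
  proof -
    have h1: "b*(s'-s) dvd s'" "(b-1)*(s'-s) dvd s" using rc s unfolding RC_def by auto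
    have A1: "s dvd L" unfolding L_def using fin s by auto
    have A2: "(s'-s) dvd s" using h1(2) by (rule dvd_mult_right)
    have A3: "L dvd Y*b^e" unfolding Yg(1) using Yg(3) by (rule mult_dvd_mono[OF dvd_refl])
    have sd: "(s'-s) dvd Y*b^e" by (rule dvd_trans[OF dvd_trans[OF A2 A1] A3])
    have YM: "Y*M = b*(Y*b^e)" unfolding M_def power_Suc by (simp add: ac_simps)
    have d1: "b*(s'-s) dvd Y*M" unfolding YM using sd by (rule mult_dvd_mono[OF dvd_refl])
    have d2: "(b-1)*(s'-s) dvd (b-1)*(Y*b^e)" using sd by (rule mult_dvd_mono[OF dvd_refl])
    have c1: "c = (Y*M)*((b-1)*h)" unfolding cform by (simp add: ac_simps)
    have c2: "c = ((b-1)*(Y*b^e))*(b*h)" unfolding cform M_def power_Suc by (simp add: ac_simps)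
    have e1: "Y*M dvd c" using c1 by (rule dvdI)
    have e2: "(b-1)*(Y*b^e) dvd c" using c2 by (rule dvdI)
    have f1: "b*(s'-s) dvd c" by (rule dvd_trans[OF d1 e1])
    have f2: "(b-1)*(s'-s) dvd c" by (rule dvd_trans[OF d2 e2])
    have "b*(s'-s) dvd c + s'" by (rule dvd_add[OF f1 h1(1)])
    moreover have "(b-1)*(s'-s) dvd c + s" by (rule dvd_add[OF f2 h1(2)])
    moreover have "(c+s') - (c+s) = s' - s" by simp
    ultimately show ?thesis by simp
  qed
  have "RC b T" unfolding RC_def
  proof (intro ballI impI)
    fix m n assume m: "m \<in> T" and n: "n \<in> T" and lt: "n < m"
    show "b*(m-n) dvd m \<and> (b-1)*(m-n) dvd n"
    proof (cases "m = z")
      case True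
      have "n \<notin> T"
      proof
        assume "n \<in> T"
        then consider "n = z" | s where "s \<in> S" "n = c + s" unfolding T_def by blast
        then show False using lt True unfolding c_def by (cases, linarith+)
      qed
      then show ?thesis using n by blast
    next
      case False
      then obtain s' where s': "s' \<in> S" "m = c + s'" using m unfolding T_def by blast
      show ?thesis
      proof (cases "n = z")
        case True show ?thesis unfolding True s'(2) by (rule case2[OF s'(1)])
      next
        case False
        then obtain s where s: "s \<in> S" "n = c + s" using n unfolding T_def by blast
        have "s < s'" using lt s(2) s'(2) by linarith
        then show ?thesis unfolding s(2) s'(2) by (rule case3[OF s(1) s'(1)])
      qed
    qed
  qed
  then show ?thesis using finT cardT posT by (intro exI[of _ T] conjI)
qed

lemma adj_from_rel:
  fixes a b m n Q :: nat
  assumes b2: "b \<ge> 2" and lt: "n < m" and hb: "b*(m-n) dvd m" and hb1: "(b-1)*(m-n) dvd n"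
    and ha: "a = b*(b-1)" and hQ: "a*(m-n) dvd Q" and Q0: "Q > 0"
  shows "G_adj a b a (b-1) (m+Q) (n+Q)"
proof -
  define d where "d = m - n"
  have d0: "d > 0" using lt d_def by simp
  obtain u where u: "m = b*d*u" using hb d_def by (auto elim: dvdE)
  obtain w where w: "n = (b-1)*d*w" using hb1 d_def by (auto elim: dvdE)
  obtain q where q: "Q = a*d*q" using hQ d_def by (auto elim: dvdE)
  have q1: "q \<ge> 1" using q Q0 by (cases q) auto
  have "m = n + d" using d_def lt by simp
  hence "d*(b*u) = d*((b-1)*w + 1)" using u w by (simp add: algebra_simps)
  hence e1: "b*u = (b-1)*w + 1" using d0 by (metis mult_left_cancel not_gr0)
  have "u \<ge> 1" using e1 by (cases u) auto
  have wu: "w \<ge> u"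
  proof (rule ccontr)
    assume "\<not> w \<ge> u"
    hence "w + 1 \<le> u" by simp
    hence "(b-1)*(w+1) \<le> (b-1)*u" by (rule mult_le_mono2)
    moreover have "b*u = (b-1)*u + u" using b2 by (cases b) auto
    moreover have "(b-1)*(w+1) = (b-1)*w + (b-1)" by (simp only: distrib_left mult_1_right)
    ultimately show False using e1 \<open>u \<ge> 1\<close> b2 by linarith
  qed
  define t0 where "t0 = w - u"
  have "b*u = (b-1)*u + u" using b2 by (cases b) auto
  moreover have "(b-1)*w = (b-1)*u + (b-1)*t0" using wu unfolding t0_def
    by (metis add_mult_distrib2 le_add_diff_inverse)
  ultimately have "u = 1 + (b-1)*t0" using e1 by linarith
  hence mm: "m = d*(a*t0 + b)" using u ha by (simp add: algebra_simps)
  have nn: "n = d*(a*t0 + (b-1))" using mm \<open>m = n + d\<close> b2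
    by (simp add: algebra_simps)
  define T where "T = t0 + q"
  have T1: "T \<ge> 1" using q1 T_def by simp
  have M: "m + Q = d*(a*T + b)" using mm q T_def by (simp add: algebra_simps)
  have N: "n + Q = d*(a*T + (b-1))" using nn q T_def by (simp add: algebra_simps)
  have "real (m+Q) / real (n+Q) = (real a * real T + real b) / (real a * real T + real (b-1))"
  proof -
    have M': "real (m+Q) = real d * (real a*real T + real b)" unfolding M by simp
    have N': "real (n+Q) = real d * (real a*real T + real (b-1))" unfolding N by (simp only: of_nat_mult of_nat_add)
    have "real d \<noteq> 0" using d0 by simp
    show ?thesis unfolding M' N' by (rule mult_divide_mult_cancel_left[OF \<open>real d \<noteq> 0\<close>])
  qed
  hence "real (m+Q) / real (n+Q) = (real a * real T + real b) / (real a * real T + real (b-1)) \<and> T \<ge> 1"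
    using T1 by (rule conjI)
  hence "\<exists>t. real (m+Q) / real (n+Q) = (real a * real t + real b) / (real a * real t + real (b-1)) \<and> t \<ge> 1"
    by (rule exI)
  hence "real (m+Q) / real (n+Q) \<in> ratio_set a b a (b-1)"
    unfolding ratio_set_def mem_Collect_eq .
  moreover have "m + Q \<ge> 1" "n + Q \<ge> 1" using Q0 by auto
  ultimately show ?thesis unfolding G_adj_def by blast
qed


lemma G_adj_sym: "G_adj a b c d m n \<Longrightarrow> G_adj a b c d n m"
  unfolding G_adj_def by blast

lemma scale_rc:
  fixes b :: nat
  assumes b1: "b \<ge> 1" and rc: "RC b S"
  shows "RC b ((\<lambda>s. b*s) ` S)"
  unfolding RC_def
proof (intro ballI impI)
  fix m n assume m: "m \<in> (\<lambda>s. b*s) ` S" and n: "n \<in> (\<lambda>s. b*s) ` S" and lt: "n < m"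
  from m obtain m0 where m0: "m0 \<in> S" "m = b*m0" by blast
  from n obtain n0 where n0: "n0 \<in> S" "n = b*n0" by blast
  have lt0: "n0 < m0" using lt m0(2) n0(2) by simp
  have h1: "b*(m0-n0) dvd m0" "(b-1)*(m0-n0) dvd n0" using rc m0(1) n0(1) lt0 unfolding RC_def by auto
  have dm: "b*m0 - b*n0 = b*(m0-n0)" by (simp add: diff_mult_distrib2)
  have X1: "b*(b*(m0-n0)) dvd b*m0" by (rule mult_dvd_mono[OF dvd_refl h1(1)])
  have X2: "b*((b-1)*(m0-n0)) dvd b*n0" by (rule mult_dvd_mono[OF dvd_refl h1(2)])
  have X3: "b*((b-1)*(m0-n0)) = (b-1)*(b*(m0-n0))" by (simp only: mult.left_commute)
  have "b*(m-n) dvd m" unfolding m0(2) n0(2) dm by (rule X1)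
  moreover have "(b-1)*(m-n) dvd n" unfolding m0(2) n0(2) dm X3[symmetric] by (rule X2)
  ultimately show "b*(m-n) dvd m \<and> (b-1)*(m-n) dvd n" by (rule conjI)
qed

lemma exists_rc:
  fixes b k :: nat
  assumes b2: "b \<ge> 2"
  shows "\<exists>S. finite S \<and> card S = k \<and> (\<forall>s\<in>S. s > 0) \<and> RC b S"
proof (induction k)
  case 0
  have "finite ({}::nat set) \<and> card ({}::nat set) = 0 \<and> (\<forall>s\<in>{}. s > (0::nat)) \<and> RC b {}"
    by (simp add: RC_def)
  then show ?case by (rule exI)
next
  case (Suc k)
  from Suc.IH obtain S where S0: "finite S \<and> card S = k \<and> (\<forall>s\<in>S. s > 0) \<and> RC b S" ..
  have S: "finite S" "card S = k" "\<forall>s\<in>S. s > 0" "RC b S" using S0 by auto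
  define S1 where "S1 = (\<lambda>s. b*s) ` S"
  have f1: "finite S1" unfolding S1_def using S(1) by simp
  have inj: "inj_on (\<lambda>s. b*s) S" using b2 by (simp add: inj_on_def)
  have c1: "card S1 = k" unfolding S1_def using card_image[OF inj] S(2) by simp
  have p1: "\<forall>s\<in>S1. s > 0" unfolding S1_def using S(3) b2 by auto
  have d1: "\<forall>s\<in>S1. b dvd s" unfolding S1_def by auto
  have r1: "RC b S1" unfolding S1_def using scale_rc S(4) b2 by simp
  from step[OF b2 f1 p1 d1 r1] obtain T where T0: "finite T \<and> card T = Suc (card S1) \<and> (\<forall>t\<in>T. t > 0) \<and> RC b T" ..
  have T: "finite T" "card T = Suc (card S1)" "\<forall>t\<in>T. t > 0" "RC b T" using T0 by auto
  have "finite T \<and> card T = Suc k \<and> (\<forall>t\<in>T. t > 0) \<and> RC b T" using T c1 by simp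
  then show ?case by (rule exI)
qed

lemma window:
  fixes a b k :: nat
  assumes b2: "b \<ge> 2" and ha: "a = b*(b-1)"
  shows "\<exists>H. H \<ge> 1 \<and> (\<forall>n. \<exists>S'. S' \<subseteq> {n+1..n+H} \<and> card S' = k \<and> G_clique a b a (b-1) S')"
proof -
  from exists_rc[OF b2, of k] obtain S where S0: "finite S \<and> card S = k \<and> (\<forall>s\<in>S. s > 0) \<and> RC b S" ..
  have S: "finite S" "card S = k" "\<forall>s\<in>S. s > 0" "RC b S" using S0 by auto
  define P where "P = \<Prod>S"
  have P0: "P > 0" unfolding P_def using S(1) S(3) by (simp add: prod_pos)
  have a2: "a \<ge> 2"
  proof -
    have "1 \<le> b - 1" using b2 by simp
    hence "2*1 \<le> b*(b-1)" using b2 by (rule mult_le_mono[rotated])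
    thus ?thesis unfolding ha by simp
  qed
  define Q0 where "Q0 = a*P"
  have Q00: "Q0 > 0" unfolding Q0_def using a2 P0 by simp
  define H where "H = Q0 + P"
  have sle: "s \<le> P" if "s \<in> S" for s
  proof -
    have "s dvd P" unfolding P_def using S(1) that by auto
    then show ?thesis using P0 by (rule dvd_imp_le)
  qed
  have "\<forall>n. \<exists>S'. S' \<subseteq> {n+1..n+H} \<and> card S' = k \<and> G_clique a b a (b-1) S'"
  proof
    fix n
    define q where "q = n div Q0 + 1"
    define Q where "Q = q*Q0"
    have Qeq: "Q = Q0*(n div Q0) + Q0" unfolding Q_def q_def by (simp add: algebra_simps)
    have dm: "Q0*(n div Q0) + n mod Q0 = n" by (rule mult_div_mod_eq)
    have "n mod Q0 < Q0" using Q00 by simp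
    hence Qgt: "n < Q" using Qeq dm by linarith
    have Qle: "Q \<le> n + Q0" using Qeq dm by linarith
    have Q0dQ: "Q0 dvd Q" unfolding Q_def by simp
    have Qpos: "Q > 0" using Qgt by simp
    define S' where "S' = (\<lambda>s. s + Q) ` S"
    have sub: "S' \<subseteq> {n+1..n+H}"
    proof
      fix x assume "x \<in> S'"
      then obtain s where s: "s \<in> S" "x = s + Q" unfolding S'_def by blast
      have "s > 0" using S(3) s(1) by blast
      moreover have "s \<le> P" using sle s(1) .
      ultimately show "x \<in> {n+1..n+H}" unfolding s(2) H_def using Qgt Qle by simp
    qed
    have inj: "inj_on (\<lambda>s. s + Q) S" by (simp add: inj_on_def)
    have cardS': "card S' = k" unfolding S'_def using card_image[OF inj] S(2) by simp
    have adj: "G_adj a b a (b-1) (s1 + Q) (s2 + Q)" if s: "s1 \<in> S" "s2 \<in> S" "s2 < s1" for s1 s2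
    proof -
      have h1: "b*(s1-s2) dvd s1" "(b-1)*(s1-s2) dvd s2" using S(4) s unfolding RC_def by auto
      have "(s1-s2) dvd s2" using h1(2) by (rule dvd_mult_right)
      moreover have "s2 dvd P" unfolding P_def using S(1) s(2) by auto
      ultimately have "(s1-s2) dvd P" by (rule dvd_trans)
      hence "a*(s1-s2) dvd Q0" unfolding Q0_def by (rule mult_dvd_mono[OF dvd_refl])
      hence "a*(s1-s2) dvd Q" using Q0dQ by (rule dvd_trans)
      then show ?thesis by (rule adj_from_rel[OF b2 s(3) h1(1) h1(2) ha _ Qpos])
    qed
    have cl: "G_clique a b a (b-1) S'"
      unfolding G_clique_def
    proof (intro conjI ballI impI)
      show "S' \<subseteq> {1..}" using sub by auto
      fix x y assume x: "x \<in> S'" and y: "y \<in> S'" and ne: "x \<noteq> y"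
      from x obtain s1 where s1: "s1 \<in> S" "x = s1 + Q" unfolding S'_def by blast
      from y obtain s2 where s2: "s2 \<in> S" "y = s2 + Q" unfolding S'_def by blast
      have "s1 \<noteq> s2" using ne s1(2) s2(2) by blast
      hence "s2 < s1 \<or> s1 < s2" by linarith
      then show "G_adj a b a (b-1) x y"
      proof
        assume "s2 < s1"
        then show ?thesis unfolding s1(2) s2(2) by (rule adj[OF s1(1) s2(1)])
      next
        assume "s1 < s2"
        then have "G_adj a b a (b-1) y x" unfolding s1(2) s2(2) by (rule adj[OF s2(1) s1(1)])
        then show ?thesis by (rule G_adj_sym)
      qed
    qed
    show "\<exists>S'. S' \<subseteq> {n+1..n+H} \<and> card S' = k \<and> G_clique a b a (b-1) S'"
      using sub cardS' cl by (intro exI[of _ S'] conjI)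
  qed
  moreover have "H \<ge> 1" unfolding H_def using Q00 by simp
  ultimately show ?thesis by (intro exI[of _ H] conjI)
qed

theorem proposition3p4:
  fixes a b :: nat
  assumes "a \<ge> 1" and "b \<ge> 2" and "a = b * (b - 1)"
  shows "(\<forall>k::nat. k \<ge> 2 \<longrightarrow> (\<exists>H::nat. H \<ge> 1 \<and>
            (\<forall>n::nat. \<exists>S. S \<subseteq> {n+1..n+H} \<and> card S = k \<and>
                 G_clique a b a (b - 1) S)))
       \<and> (\<forall>k::nat. \<exists>S. finite S \<and> card S = k \<and> G_clique a b a (b - 1) S)"
proof (intro conjI allI impI)
  fix k :: nat
  show "\<exists>H::nat. H \<ge> 1 \<and> (\<forall>n::nat. \<exists>S. S \<subseteq> {n+1..n+H} \<and> card S = k \<and> G_clique a b a (b - 1) S)"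
    by (rule window[OF assms(2) assms(3)])
next
  fix k :: nat
  from window[OF assms(2) assms(3), of k] obtain H where H0: "H \<ge> 1 \<and> (\<forall>n::nat. \<exists>S. S \<subseteq> {n+1..n+H} \<and> card S = k \<and> G_clique a b a (b - 1) S)" ..
  from spec[OF conjunct2[OF H0], of 0] obtain S where S0: "S \<subseteq> {0+1..0+H} \<and> card S = k \<and> G_clique a b a (b - 1) S" ..
  have S: "S \<subseteq> {0+1..0+H}" "card S = k" "G_clique a b a (b - 1) S" using S0 by auto
  have "finite S" using S(1) by (rule finite_subset) simp
  then show "\<exists>S. finite S \<and> card S = k \<and> G_clique a b a (b - 1) S" using S by (intro exI[of _ S] conjI)
qed

end
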